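(* Let $T:\mathbb{Z}\to\mathbb{Z}$ be defined by $T(n)=n/2$ if $n$ is even and $T(n)=(3n+1)/2$ if $n$ is odd, and let $T_R:\mathbb{Z}\to\mathbb{Z}$ be defined by $$T_R(n)=\begin{cases}\dfrac{3n}{4}, & n\equiv 0\pmod 4,\\[2pt] \dfrac{n-2}{4}, & n\equiv 2\pmod 4,\\[2pt] \dfrac{3n+1}{2}, & n\equiv 1\pmod 2.\end{cases}$$ Then the following are equivalent: (a) for every positive integer $n$, some iterate $T^k(n)$ equals $1$ (the $3x+1$ conjecture); (b) for every integer $n\ge 0$, the $T_R$-trajectory of $n$ converges to $0$, i.e., $T_R^k(n)=0$ for some $k\ge 0$.
   Context: Iterates are defined by $f^0(n)=n$, $f^{k+1}(n)=f(f^k(n))$; the $f$-trajectory of $n$ is $(f^k(n))_{k\ge0}$. Note $0$ is a fixed point of $T_R$. *)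

theory Defs
  imports Main
begin

definition T :: "int \<Rightarrow> int" where
  "T n = (if even n then n div 2 else (3 * n + 1) div 2)"

definition T_R :: "int \<Rightarrow> int" where
  "T_R n = (if n mod 4 = 0 then (3 * n) div 4
            else if n mod 4 = 2 then (n - 2) div 4
            else (3 * n + 1) div 2)"

end

theory Submission
  imports Defs
begin

definition reach :: "int \<Rightarrow> bool" where
  "reach x = (\<exists>k::nat. (T ^^ k) x = 1)"

lemma reach_T_imp: "reach (T x) \<Longrightarrow> reach x"
  unfolding reach_def by (metis funpow_Suc_right o_apply)

lemma reach_imp_T: "reach x \<Longrightarrow> reach (T x)"
proof -
  assume "reach x"
  then obtain k where k: "(T ^^ k) x = 1" unfolding reach_def by blast
  show ?thesis
  proof (cases k)
    case 0
    then have "x = 1" using k by simp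
    then have "(T ^^ 1) (T x) = 1" by (simp add: T_def)
    then show ?thesis unfolding reach_def by blast
  next
    case (Suc j)
    then have "(T ^^ j) (T x) = 1" using k by (simp add: funpow_Suc_right del: funpow.simps)
    then show ?thesis unfolding reach_def by blast
  qed
qed

lemma L1: "odd n \<Longrightarrow> T (2*n+1) = 2 * T_R n + 1"
proof -
  assume "odd n"
  then obtain m where m: "n = 2*m+1" by (metis oddE)
  have a: "T (2*n+1) = 6*m+5" unfolding m T_def by simp
  have "n mod 4 \<noteq> 0" "n mod 4 \<noteq> 2" using m by presburger+
  then have "T_R n = 3*m+2" unfolding T_R_def using m by simp
  then show ?thesis using a by simp
qed

lemma L2: "n mod 4 = 0 \<Longrightarrow> T (T (2*n+1)) = 2 * T_R n + 1"
proof -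
  assume h: "n mod 4 = 0"
  then obtain m where m: "n = 4*m" by (metis dvd_def mod_eq_0_iff_dvd)
  have a: "T (2*n+1) = 12*m+2" unfolding m T_def by simp
  have b: "T (12*m+2) = 6*m+1" unfolding T_def by simp
  have "T_R n = 3*m" unfolding T_R_def using m by simp
  then show ?thesis using a b by simp
qed

lemma L3: "n mod 4 = 2 \<Longrightarrow> T (T (T (2*n+1))) = T (2 * T_R n + 1)
   \<and> T (2*n+1) \<noteq> 1 \<and> T (T (2*n+1)) \<noteq> 1"
proof -
  assume h: "n mod 4 = 2"
  then obtain m where m: "n = 4*m+2" by (metis mult.commute mod_mult_div_eq add.commute)
  have a: "T (2*n+1) = 12*m+8" unfolding m T_def by simp
  have b: "T (12*m+8) = 6*m+4" unfolding T_def by simp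
  have c: "T (6*m+4) = 3*m+2" unfolding T_def by simp
  have "T_R n = m" unfolding T_R_def using m by simp
  moreover have "T (2*m+1) = 3*m+2" unfolding T_def by simp
  ultimately show ?thesis using a b c by presburger
qed

lemma TR_nonneg: "n \<ge> 0 \<Longrightarrow> T_R n \<ge> 0"
  unfolding T_R_def by simp presburger

lemma dirB: "(T_R ^^ j) n = 0 \<Longrightarrow> reach (2*n+1)"
proof (induction j arbitrary: n)
  case 0
  then show ?case unfolding reach_def by (intro exI[of _ 0]) simp
next
  case (Suc j)
  then have "(T_R ^^ j) (T_R n) = 0" by (simp add: funpow_Suc_right del: funpow.simps)
  then have r: "reach (2 * T_R n + 1)" using Suc.IH by blast
  have "odd n \<or> n mod 4 = 0 \<or> n mod 4 = 2"
      by (simp add: even_iff_mod_2_eq_zero; presburger)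
    then consider "odd n" | "n mod 4 = 0" | "n mod 4 = 2" by blast
  then show ?case
  proof cases
    case 1 then show ?thesis using r L1 reach_T_imp by metis
  next
    case 2 then show ?thesis using r L2 reach_T_imp by metis
  qed (use r L3 reach_T_imp reach_imp_T in metis)
qed

lemma dirA: "n \<ge> 0 \<Longrightarrow> (T ^^ k) (2*n+1) = 1 \<Longrightarrow> \<exists>j. (T_R ^^ j) n = 0"
proof (induction k arbitrary: n rule: less_induct)
  case (less k)
  show ?case
  proof (cases "n = 0")
    case True then show ?thesis by (intro exI[of _ 0]) simp
  next
    case False
    have nn: "T_R n \<ge> 0" using TR_nonneg less.prems by blast
    have ex: "\<exists>j. (T_R ^^ j) (T_R n) = 0 \<Longrightarrow> ?thesis"
      by (metis funpow_Suc_right o_apply)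
    have "odd n \<or> n mod 4 = 0 \<or> n mod 4 = 2"
      by (simp add: even_iff_mod_2_eq_zero; presburger)
    then consider "odd n" | "n mod 4 = 0" | "n mod 4 = 2" by blast
    then show ?thesis
    proof cases
      case 1
      have "k \<noteq> 0"
      proof
        assume "k = 0"
        then have "2*n+1 = 1" using less.prems by simp
        then show False using False by simp
      qed
      then obtain i where i: "k = Suc i" by (cases k) auto
      have "(T ^^ i) (2 * T_R n + 1) = 1"
        using less.prems(2) L1[OF 1] unfolding i by (simp add: funpow_Suc_right del: funpow.simps)
      moreover have "i < k" using i by simp
      ultimately show ?thesis using less.IH[of i] nn ex by blast
    next
      case 2
      have "k \<noteq> 0"
      proof
        assume "k = 0"
        then have "2*n+1 = 1" using less.prems by simp
        then show False using False by simp
      qed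
      moreover have "k \<noteq> 1"
      proof
        assume "k = 1"
        then have "T (2*n+1) = 1" using less.prems by simp
        moreover obtain m where "n = 4*m" using 2 by (metis dvd_def mod_eq_0_iff_dvd)
        ultimately show False unfolding T_def by simp presburger
      qed
      ultimately obtain i where i: "k = Suc (Suc i)" by (cases k; cases "k - 1") auto
      have "(T ^^ i) (2 * T_R n + 1) = 1"
        using less.prems(2) L2[OF 2] unfolding i by (simp add: funpow_Suc_right del: funpow.simps)
      moreover have "i < k" using i by simp
      ultimately show ?thesis using less.IH[of i] nn ex by blast
    next
      case 3
      have l3: "T (T (T (2*n+1))) = T (2 * T_R n + 1)" "T (2*n+1) \<noteq> 1" "T (T (2*n+1)) \<noteq> 1"
        using L3[OF 3] by auto
      have "k \<noteq> 0"
      proof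
        assume "k = 0"
        then have "2*n+1 = 1" using less.prems by simp
        then show False using False by simp
      qed
      moreover have "k \<noteq> 1" using l3 less.prems by auto
      moreover have "k \<noteq> 2" using l3 less.prems by (auto simp: numeral_2_eq_2)
      ultimately obtain i where i: "k = Suc (Suc (Suc i))"
        by (metis One_nat_def Suc_1 not0_implies_Suc)
      have "(T ^^ i) (T (T (T (2*n+1)))) = 1"
        using less.prems(2) unfolding i by (simp add: funpow_Suc_right del: funpow.simps)
      then have "(T ^^ Suc i) (2 * T_R n + 1) = 1"
        using l3 by (simp add: funpow_Suc_right del: funpow.simps)
      moreover have "Suc i < k" using i by simp
      ultimately show ?thesis using less.IH[of "Suc i"] nn ex by blast
    qed
  qed
qed

lemma pos_reach: "(\<forall>m::int. m \<ge> 0 \<longrightarrow> reach (2*m+1)) \<Longrightarrow> n > 0 \<Longrightarrow> reach n"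
proof (induction "nat n" arbitrary: n rule: less_induct)
  case less
  show ?case
  proof (cases "even n")
    case True
    have "T n = n div 2" unfolding T_def using True by simp
    moreover have "nat (n div 2) < nat n" "n div 2 > 0" using True less.prems by auto
    ultimately show ?thesis using less.hyps less.prems reach_T_imp by metis
  next
    case False
    then obtain m where "n = 2*m+1" by (metis oddE)
    then show ?thesis using less.prems by auto
  qed
qed

theorem theorem1:
  shows "(\<forall>n::int. n > 0 \<longrightarrow> (\<exists>k::nat. (T ^^ k) n = 1))
     \<longleftrightarrow> (\<forall>n::int. n \<ge> 0 \<longrightarrow> (\<exists>k::nat. (T_R ^^ k) n = 0))"
proof
  assume a: "\<forall>n::int. n > 0 \<longrightarrow> (\<exists>k::nat. (T ^^ k) n = 1)"
  show "\<forall>n::int. n \<ge> 0 \<longrightarrow> (\<exists>k::nat. (T_R ^^ k) n = 0)"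
  proof (intro allI impI)
    fix n :: int assume "n \<ge> 0"
    then obtain k where "(T ^^ k) (2*n+1) = 1" using a[rule_format, of "2*n+1"] by auto
    then show "\<exists>k. (T_R ^^ k) n = 0" using dirA \<open>n \<ge> 0\<close> by blast
  qed
next
  assume b: "\<forall>n::int. n \<ge> 0 \<longrightarrow> (\<exists>k::nat. (T_R ^^ k) n = 0)"
  have "\<forall>m::int. m \<ge> 0 \<longrightarrow> reach (2*m+1)" using b dirB by blast
  then show "\<forall>n::int. n > 0 \<longrightarrow> (\<exists>k::nat. (T ^^ k) n = 1)"
    using pos_reach unfolding reach_def by blast
qed

end
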